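(* Let $a\neq 0$, $b$ be integers with $\gcd(a,b)=1$, let $k\ge 1$ be an integer, and let $c_1,e_1\in\mathbb{Q}\setminus\{0\}$, $c_0,e_0\in\mathbb{Q}$. Then there is no integer $q\ge 3$ such that the polynomial identity $$S_{a,b}^k(c_1x+c_0)=e_1x^q+e_0$$ holds in $\mathbb{Q}[x]$.
   Context: The Bernoulli polynomials $B_n(x)$ are defined by $\frac{t e^{tx}}{e^t-1}=\sum_{n\ge 0}B_n(x)\frac{t^n}{n!}$. For integers $a\neq 0$, $b$ with $\gcd(a,b)=1$ and an integer $k\ge 1$, define the polynomial $$S_{a,b}^k(x):=\frac{a^k}{k+1}\left(B_{k+1}\!\left(x+\frac{b}{a}\right)-B_{k+1}\!\left(\frac{b}{a}\right)\right)\in\mathbb{Q}[x].$$ *)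

theory Defs
  imports "HOL-Computational_Algebra.Polynomial"
begin

text \<open>Bernoulli numbers with B_1 = -1/2, i.e. the coefficients of t/(e^t - 1):
  B_0 = 1 and sum_{j=0}^{n} (n+1 choose j) B_j = 0 for n >= 1.\<close>
fun bernoulli :: "nat \<Rightarrow> rat" where
  "bernoulli n = (if n = 0 then 1 else
     - (\<Sum>j<n. of_nat (Suc n choose j) * bernoulli j) / of_nat (Suc n))"

declare bernoulli.simps [simp del]

definition bernpoly :: "nat \<Rightarrow> rat poly" where
  "bernpoly n = (\<Sum>j\<le>n. monom (of_nat (n choose j) * bernoulli j) (n - j))"

definition S_poly :: "int \<Rightarrow> int \<Rightarrow> nat \<Rightarrow> rat poly" where
  "S_poly a b k = smult (of_int a ^ k / of_nat (k + 1))
     (pcompose (bernpoly (k + 1)) [:of_int b / of_int a, 1:]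
      - [:poly (bernpoly (k + 1)) (of_int b / of_int a):])"

end

theory Submission
  imports Defs
begin

lemma pcomp_pow: "pcompose (p ^ n) r = (pcompose p r) ^ n" for p r :: "rat poly"
  by (induct n) (simp_all add: pcompose_mult pcompose_1)

lemma coeff_lin_pow:
  "coeff ([:w, v:] ^ q) i = (if i \<le> q then of_nat (q choose i) * v ^ i * w ^ (q - i) else 0)"
  for w v :: rat
proof (cases "i \<le> q")
  case True then show ?thesis by (simp add: coeff_linear_poly_power)
next
  case False
  have "degree ([:w, v:] ^ q) \<le> degree [:w,v:] * q" by (rule degree_power_le)
  also have "\<dots> \<le> q" by simp
  finally show ?thesis using False by (simp add: coeff_eq_0)
qed

lemma coeff_bernpoly:
  "coeff (bernpoly n) i = (if i \<le> n then of_nat (n choose i) * bernoulli (n - i) else 0)"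
proof -
  have "coeff (bernpoly n) i = (\<Sum>j\<le>n. if j = n - i \<and> i \<le> n then of_nat (n choose j) * bernoulli j else 0)"
    unfolding bernpoly_def coeff_sum coeff_monom
    by (rule sum.cong) auto
  also have "\<dots> = (if i \<le> n then of_nat (n choose (n - i)) * bernoulli (n - i) else 0)"
    by (cases "i \<le> n") (simp_all add: sum.delta)
  finally show ?thesis by (simp add: binomial_symmetric[symmetric])
qed

lemma bern0[simp]: "bernoulli 0 = 1"
  by (simp add: bernoulli.simps)

lemma bern1: "bernoulli 1 = -1/2"
  by (simp add: bernoulli.simps)

lemma bern2: "bernoulli 2 = 1/6"
  by (simp add: bernoulli.simps numeral_2_eq_2 lessThan_Suc)

theorem lemma3:
  fixes a b :: int and k :: nat and c1 c0 e1 e0 :: rat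
  assumes "a \<noteq> 0" and "gcd a b = 1" and "k \<ge> 1"
    and "c1 \<noteq> 0" and "e1 \<noteq> 0"
  shows "\<not> (\<exists>q::nat. q \<ge> 3 \<and>
           pcompose (S_poly a b k) [:c0, c1:] = monom e1 q + [:e0:])"
proof
  assume "\<exists>q::nat. q \<ge> 3 \<and> pcompose (S_poly a b k) [:c0, c1:] = monom e1 q + [:e0:]"
  then obtain q where q3: "q \<ge> 3" and H: "pcompose (S_poly a b k) [:c0, c1:] = monom e1 q + [:e0:]"
    by blast
  define n where "n = k + 1"
  define A :: rat where "A = of_int a ^ k / of_nat (k + 1)"
  define \<beta> :: rat where "\<beta> = of_int b / of_int a"
  define cst where "cst = poly (bernpoly n) \<beta>"
  define u where "u = \<beta> + c0"
  define w where "w = - u / c1"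
  define v where "v = 1 / c1"
  define M where "M = [:w, v:]"
  have A0: "A \<noteq> 0" using assms(1) by (simp add: A_def)
  have v0: "v \<noteq> 0" using assms(4) by (simp add: v_def)
  have L1: "pcompose [:\<beta>, 1:] [:c0, c1:] = [:u, c1:]"
    by (simp add: pcompose_pCons u_def)
  have L2: "pcompose [:u, c1:] M = [:0, 1:]"
    using assms(4) by (simp add: pcompose_pCons M_def w_def v_def field_simps)
  have L12: "pcompose [:\<beta>, 1:] (pcompose [:c0, c1:] M) = [:0, 1:]"
    by (simp only: pcompose_assoc L1 L2)
  have L3: "pcompose [:0, 1:] M = M"
    by (simp add: pcompose_pCons M_def)
  have "pcompose (pcompose (S_poly a b k) [:c0, c1:]) M = smult A (bernpoly n - [:cst:])"
    unfolding S_poly_def \<beta>_def[symmetric] A_def[symmetric] n_def[symmetric] cst_def[symmetric]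
    by (simp add: pcompose_smult pcompose_diff pcompose_assoc[symmetric] L12 A_def n_def)
  moreover have "pcompose (monom e1 q + [:e0:]) M = smult e1 (M ^ q) + [:e0:]"
    by (simp add: pcompose_add monom_altdef pcompose_smult pcomp_pow L3)
  ultimately have E: "smult A (bernpoly n - [:cst:]) = smult e1 (M ^ q) + [:e0:]"
    using H by simp
  have C: "A * coeff (bernpoly n) i = e1 * coeff (M ^ q) i" if "i \<ge> 1" for i
  proof -
    have "coeff (smult A (bernpoly n - [:cst:])) i = coeff (smult e1 (M ^ q) + [:e0:]) i"
      using E by simp
    with that show ?thesis by (cases i) (simp_all add: algebra_simps)
  qed
  note CB = coeff_bernpoly
  note CM = coeff_lin_pow[of w v, folded M_def]
  have "q \<le> n"
  proof (rule ccontr)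
    assume "\<not> q \<le> n"
    with C[of q] q3 CB[of n q] CM[of q q] show False using assms(5) v0 by simp
  qed
  moreover have "\<not> q < n"
  proof
    assume "q < n"
    with C[of n] q3 CB[of n n] CM[of q n] show False using A0 by simp
  qed
  ultimately have qn: "q = n" by simp
  define m where "m = n - 2"
  have m: "n = m + 2" "m \<ge> 1" using q3 qn by (simp_all add: m_def)
  have e2: "A = e1 * v ^ m * v^2"
    using C[of n] CB[of n n] CM[of q n] qn m by (simp add: power_add power2_eq_square)
  have e1: "A * of_nat n * (-1/2) = e1 * of_nat n * v ^ m * v * w"
    using C[of "m+1"] CB[of n "m+1"] CM[of q "m+1"] qn m bern1
    by (simp add: numeral_2_eq_2 binomial_symmetric algebra_simps)
  have e3a: "A * coeff (bernpoly n) m = e1 * coeff (M ^ q) m" using C[of m] m by simp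
  have e3b: "coeff (bernpoly n) m = of_nat (n choose m) * (1/6)"
    using CB[of n m] m bern2 by simp
  have e3c: "coeff (M ^ q) m = of_nat (n choose m) * v ^ m * w ^ 2"
    using CM[of q m] m qn by simp
  have e3: "A * of_nat (n choose m) * (1/6) = e1 * of_nat (n choose m) * v ^ m * w^2"
    using e3a e3b e3c by (simp add: algebra_simps)
  define P where "P = e1 * v ^ m"
  have P0: "P \<noteq> 0" using assms(5) v0 by (simp add: P_def)
  have n0: "of_nat n \<noteq> (0::rat)" using m by simp
  have c0: "of_nat (n choose m) \<noteq> (0::rat)" using m by simp
  have "of_nat n * (P * v * (v * (-1/2))) = of_nat n * (P * v * w)"
    using e1 e2 unfolding P_def by (simp add: algebra_simps power2_eq_square)
  then have f1: "P * v * (v * (-1/2)) = P * v * w" using n0 mult_left_cancel by blast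
  have "P * v \<noteq> 0" using P0 v0 by simp
  with f1 have "v * (-1/2) = w" using mult_left_cancel by blast
  hence wv: "w = - v / 2" by simp
  have "of_nat (n choose m) * (P * (v^2 / 6)) = of_nat (n choose m) * (P * w^2)"
    using e3 e2 unfolding P_def by (simp add: algebra_simps power2_eq_square)
  then have f3: "P * (v^2 / 6) = P * w^2" using c0 mult_left_cancel by blast
  hence "v^2 / 6 = w^2" using P0 mult_left_cancel by blast
  hence "v^2 / 6 = v^2 / 4" using wv by (simp add: power_divide)
  hence "v^2 = 0" by linarith
  with v0 show False by simp
qed

end
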